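(* There exists a $9\times 9$ bimagic square whose $81$ entries are pairwise distinct strings of length $6$ over $\{0,1,2\}$, each being the concatenation of two $3$-digit palindromes (read as decimal numbers, leading zeros allowed), with magic sum $S1=999999$, and such that each of the nine $3\times3$ blocks has entry sum $999999$.
   Context: A magic square of order $n$ is an $n\times n$ array of numbers in which the sums of the entries of each row, of each column and of each of the two principal diagonals all equal a common value $S1$. It is bimagic if in addition the sums of the squares of the entries of each row, each column and each of the two principal diagonals all equal a common value $S2$. The $3\times3$ blocks are the subarrays with rows $3p+1,\dots,3p+3$ and columns $3q+1,\dots,3q+3$, $p,q\in\{0,1,2\}$. *)

theory Defs
  imports Main
begin

definition dec_value :: "nat list \<Rightarrow> nat" where
  "dec_value ds = foldl (\<lambda>acc d. 10 * acc + d) 0 ds"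

definition is_palindrome :: "nat list \<Rightarrow> bool" where
  "is_palindrome xs \<longleftrightarrow> rev xs = xs"

definition valid_entry :: "nat list \<Rightarrow> bool" where
  "valid_entry s \<longleftrightarrow> length s = 6 \<and> set s \<subseteq> {0,1,2}
     \<and> is_palindrome (take 3 s) \<and> is_palindrome (drop 3 s)"

definition magic9 :: "(nat \<Rightarrow> nat \<Rightarrow> nat) \<Rightarrow> nat \<Rightarrow> bool" where
  "magic9 A S \<longleftrightarrow>
     (\<forall>i<9. (\<Sum>j<9. A i j) = S) \<and> (\<forall>j<9. (\<Sum>i<9. A i j) = S)
     \<and> (\<Sum>i<9. A i i) = S \<and> (\<Sum>i<9. A i (8 - i)) = S"

definition bimagic9 :: "(nat \<Rightarrow> nat \<Rightarrow> nat) \<Rightarrow> nat \<Rightarrow> nat \<Rightarrow> bool" where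
  "bimagic9 A S1 S2 \<longleftrightarrow> magic9 A S1 \<and> magic9 (\<lambda>i j. (A i j)^2) S2"

definition block_sums9 :: "(nat \<Rightarrow> nat \<Rightarrow> nat) \<Rightarrow> nat \<Rightarrow> bool" where
  "block_sums9 A S \<longleftrightarrow> (\<forall>p<3. \<forall>q<3. (\<Sum>i<3. \<Sum>j<3. A (3*p+i) (3*q+j)) = S)"

end

theory Submission
  imports Defs
begin

definition dA :: "nat \<Rightarrow> nat \<Rightarrow> nat" where
  "dA i j = (2*(i div 3) + 2*(j div 3) + j mod 3 + 2) mod 3"
definition dB :: "nat \<Rightarrow> nat \<Rightarrow> nat" where
  "dB i j = (i div 3 + 2*(i mod 3) + 2*(j div 3)) mod 3"
definition dC :: "nat \<Rightarrow> nat \<Rightarrow> nat" where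
  "dC i j = (2*(i mod 3) + 2*(j div 3) + 2*(j mod 3)) mod 3"
definition dD :: "nat \<Rightarrow> nat \<Rightarrow> nat" where
  "dD i j = (2*(i div 3) + 2*(i mod 3) + j mod 3 + 2) mod 3"

definition MM :: "nat \<Rightarrow> nat \<Rightarrow> nat list" where
  "MM i j = [dA i j, dB i j, dA i j, dC i j, dD i j, dC i j]"

definition dec :: "nat list \<Rightarrow> nat \<times> nat" where
  "dec s = (let a = s!0; b = s!1; c = s!3; d = s!4 in
     (3*((a+2*c+d+2) mod 3) + (a+b+c+1) mod 3, 3*((b+c+d+1) mod 3) + (2*a+b+2*d+1) mod 3))"

lemma lt9: "{..<(9::nat)} = {0,1,2,3,4,5,6,7,8}" by (auto simp: eval_nat_numeral)
lemma all9: "(\<forall>i<(9::nat). P i) = (P 0 \<and> P 1 \<and> P 2 \<and> P 3 \<and> P 4 \<and> P 5 \<and> P 6 \<and> P 7 \<and> P 8)"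
  by (simp only: lessThan_iff[symmetric] lt9 ball_simps insert_iff empty_iff) blast
lemma lt3: "{..<(3::nat)} = {0,1,2}" by (auto simp: eval_nat_numeral)
lemma all3: "(\<forall>i<(3::nat). P i) = (P 0 \<and> P 1 \<and> P 2)"
  by (simp only: lessThan_iff[symmetric] lt3 ball_simps insert_iff empty_iff) blast
lemma sum9: "(\<Sum>i<(9::nat). f i) = f 0 + f 1 + f 2 + f 3 + f 4 + f 5 + f 6 + f 7 + (f 8::nat)"
  by (simp add: eval_nat_numeral)
lemma sum3: "(\<Sum>i<(3::nat). f i) = f 0 + f 1 + (f 2::nat)"
  by (simp add: eval_nat_numeral)

lemma MMtab:
  "MM 0 0 = [2,0,2,0,2,0]"
  "MM 0 1 = [0,0,0,2,0,2]"
  "MM 0 2 = [1,0,1,1,1,1]"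
  "MM 0 3 = [1,2,1,2,2,2]"
  "MM 0 4 = [2,2,2,1,0,1]"
  "MM 0 5 = [0,2,0,0,1,0]"
  "MM 0 6 = [0,1,0,1,2,1]"
  "MM 0 7 = [1,1,1,0,0,0]"
  "MM 0 8 = [2,1,2,2,1,2]"
  "MM 1 0 = [2,2,2,2,1,2]"
  "MM 1 1 = [0,2,0,1,2,1]"
  "MM 1 2 = [1,2,1,0,0,0]"
  "MM 1 3 = [1,1,1,1,1,1]"
  "MM 1 4 = [2,1,2,0,2,0]"
  "MM 1 5 = [0,1,0,2,0,2]"
  "MM 1 6 = [0,0,0,0,1,0]"
  "MM 1 7 = [1,0,1,2,2,2]"
  "MM 1 8 = [2,0,2,1,0,1]"
  "MM 2 0 = [2,1,2,1,0,1]"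
  "MM 2 1 = [0,1,0,0,1,0]"
  "MM 2 2 = [1,1,1,2,2,2]"
  "MM 2 3 = [1,0,1,0,0,0]"
  "MM 2 4 = [2,0,2,2,1,2]"
  "MM 2 5 = [0,0,0,1,2,1]"
  "MM 2 6 = [0,2,0,2,0,2]"
  "MM 2 7 = [1,2,1,1,1,1]"
  "MM 2 8 = [2,2,2,0,2,0]"
  "MM 3 0 = [1,1,1,0,1,0]"
  "MM 3 1 = [2,1,2,2,2,2]"
  "MM 3 2 = [0,1,0,1,0,1]"
  "MM 3 3 = [0,0,0,2,1,2]"
  "MM 3 4 = [1,0,1,1,2,1]"
  "MM 3 5 = [2,0,2,0,0,0]"
  "MM 3 6 = [2,2,2,1,1,1]"
  "MM 3 7 = [0,2,0,0,2,0]"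
  "MM 3 8 = [1,2,1,2,0,2]"
  "MM 4 0 = [1,0,1,2,0,2]"
  "MM 4 1 = [2,0,2,1,1,1]"
  "MM 4 2 = [0,0,0,0,2,0]"
  "MM 4 3 = [0,2,0,1,0,1]"
  "MM 4 4 = [1,2,1,0,1,0]"
  "MM 4 5 = [2,2,2,2,2,2]"
  "MM 4 6 = [2,1,2,0,0,0]"
  "MM 4 7 = [0,1,0,2,1,2]"
  "MM 4 8 = [1,1,1,1,2,1]"
  "MM 5 0 = [1,2,1,1,2,1]"
  "MM 5 1 = [2,2,2,0,0,0]"
  "MM 5 2 = [0,2,0,2,1,2]"
  "MM 5 3 = [0,1,0,0,2,0]"
  "MM 5 4 = [1,1,1,2,0,2]"
  "MM 5 5 = [2,1,2,1,1,1]"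
  "MM 5 6 = [2,0,2,2,2,2]"
  "MM 5 7 = [0,0,0,1,0,1]"
  "MM 5 8 = [1,0,1,0,1,0]"
  "MM 6 0 = [0,2,0,0,0,0]"
  "MM 6 1 = [1,2,1,2,1,2]"
  "MM 6 2 = [2,2,2,1,2,1]"
  "MM 6 3 = [2,1,2,2,0,2]"
  "MM 6 4 = [0,1,0,1,1,1]"
  "MM 6 5 = [1,1,1,0,2,0]"
  "MM 6 6 = [1,0,1,1,0,1]"
  "MM 6 7 = [2,0,2,0,1,0]"
  "MM 6 8 = [0,0,0,2,2,2]"
  "MM 7 0 = [0,1,0,2,2,2]"
  "MM 7 1 = [1,1,1,1,0,1]"
  "MM 7 2 = [2,1,2,0,1,0]"
  "MM 7 3 = [2,0,2,1,2,1]"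
  "MM 7 4 = [0,0,0,0,0,0]"
  "MM 7 5 = [1,0,1,2,1,2]"
  "MM 7 6 = [1,2,1,0,2,0]"
  "MM 7 7 = [2,2,2,2,0,2]"
  "MM 7 8 = [0,2,0,1,1,1]"
  "MM 8 0 = [0,0,0,1,1,1]"
  "MM 8 1 = [1,0,1,0,2,0]"
  "MM 8 2 = [2,0,2,2,0,2]"
  "MM 8 3 = [2,2,2,0,1,0]"
  "MM 8 4 = [0,2,0,2,2,2]"
  "MM 8 5 = [1,2,1,1,0,1]"
  "MM 8 6 = [1,1,1,2,1,2]"
  "MM 8 7 = [2,1,2,1,2,1]"
  "MM 8 8 = [0,1,0,0,0,0]"
  by (simp_all add: MM_def dA_def dB_def dC_def dD_def)

lemma Vtab:
  "dec_value (MM 0 0) = 202020"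
  "dec_value (MM 0 1) = 202"
  "dec_value (MM 0 2) = 101111"
  "dec_value (MM 0 3) = 121222"
  "dec_value (MM 0 4) = 222101"
  "dec_value (MM 0 5) = 20010"
  "dec_value (MM 0 6) = 10121"
  "dec_value (MM 0 7) = 111000"
  "dec_value (MM 0 8) = 212212"
  "dec_value (MM 1 0) = 222212"
  "dec_value (MM 1 1) = 20121"
  "dec_value (MM 1 2) = 121000"
  "dec_value (MM 1 3) = 111111"
  "dec_value (MM 1 4) = 212020"
  "dec_value (MM 1 5) = 10202"
  "dec_value (MM 1 6) = 10"
  "dec_value (MM 1 7) = 101222"
  "dec_value (MM 1 8) = 202101"
  "dec_value (MM 2 0) = 212101"
  "dec_value (MM 2 1) = 10010"
  "dec_value (MM 2 2) = 111222"
  "dec_value (MM 2 3) = 101000"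
  "dec_value (MM 2 4) = 202212"
  "dec_value (MM 2 5) = 121"
  "dec_value (MM 2 6) = 20202"
  "dec_value (MM 2 7) = 121111"
  "dec_value (MM 2 8) = 222020"
  "dec_value (MM 3 0) = 111010"
  "dec_value (MM 3 1) = 212222"
  "dec_value (MM 3 2) = 10101"
  "dec_value (MM 3 3) = 212"
  "dec_value (MM 3 4) = 101121"
  "dec_value (MM 3 5) = 202000"
  "dec_value (MM 3 6) = 222111"
  "dec_value (MM 3 7) = 20020"
  "dec_value (MM 3 8) = 121202"
  "dec_value (MM 4 0) = 101202"
  "dec_value (MM 4 1) = 202111"
  "dec_value (MM 4 2) = 20"
  "dec_value (MM 4 3) = 20101"
  "dec_value (MM 4 4) = 121010"
  "dec_value (MM 4 5) = 222222"
  "dec_value (MM 4 6) = 212000"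
  "dec_value (MM 4 7) = 10212"
  "dec_value (MM 4 8) = 111121"
  "dec_value (MM 5 0) = 121121"
  "dec_value (MM 5 1) = 222000"
  "dec_value (MM 5 2) = 20212"
  "dec_value (MM 5 3) = 10020"
  "dec_value (MM 5 4) = 111202"
  "dec_value (MM 5 5) = 212111"
  "dec_value (MM 5 6) = 202222"
  "dec_value (MM 5 7) = 101"
  "dec_value (MM 5 8) = 101010"
  "dec_value (MM 6 0) = 20000"
  "dec_value (MM 6 1) = 121212"
  "dec_value (MM 6 2) = 222121"
  "dec_value (MM 6 3) = 212202"
  "dec_value (MM 6 4) = 10111"
  "dec_value (MM 6 5) = 111020"
  "dec_value (MM 6 6) = 101101"
  "dec_value (MM 6 7) = 202010"
  "dec_value (MM 6 8) = 222"
  "dec_value (MM 7 0) = 10222"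
  "dec_value (MM 7 1) = 111101"
  "dec_value (MM 7 2) = 212010"
  "dec_value (MM 7 3) = 202121"
  "dec_value (MM 7 4) = 0"
  "dec_value (MM 7 5) = 101212"
  "dec_value (MM 7 6) = 121020"
  "dec_value (MM 7 7) = 222202"
  "dec_value (MM 7 8) = 20111"
  "dec_value (MM 8 0) = 111"
  "dec_value (MM 8 1) = 101020"
  "dec_value (MM 8 2) = 202202"
  "dec_value (MM 8 3) = 222010"
  "dec_value (MM 8 4) = 20222"
  "dec_value (MM 8 5) = 121101"
  "dec_value (MM 8 6) = 111212"
  "dec_value (MM 8 7) = 212121"
  "dec_value (MM 8 8) = 10000"
  by (simp_all only: MMtab) (simp_all add: dec_value_def)

lemma valid: "\<forall>i<9. \<forall>j<9. valid_entry (MM i j)"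
  unfolding all9 MMtab by (simp add: valid_entry_def is_palindrome_def)

lemma decM: "\<forall>i<9. \<forall>j<9. dec (MM i j) = (i, j)"
  unfolding all9 MMtab by (simp add: dec_def)

lemma injM: "inj_on (\<lambda>(i,j). MM i j) ({..<9} \<times> {..<9})"
proof (rule inj_on_inverseI[where g=dec])
  fix x assume "x \<in> {..<9::nat} \<times> {..<9::nat}"
  then show "dec (case x of (i, j) \<Rightarrow> MM i j) = x" using decM by auto
qed

lemma magic1: "magic9 (\<lambda>i j. dec_value (MM i j)) 999999"
  unfolding magic9_def all9 sum9
  by (simp add: Vtab del: One_nat_def add: One_nat_def[symmetric] Suc_1)

lemma magic2: "magic9 (\<lambda>i j. (dec_value (MM i j))^2) 172916950695"
  unfolding magic9_def all9 sum9
  by (simp add: Vtab del: One_nat_def add: One_nat_def[symmetric] Suc_1)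

lemma blocks: "block_sums9 (\<lambda>i j. dec_value (MM i j)) 999999"
  unfolding block_sums9_def all3 sum3
  by (simp add: Vtab del: One_nat_def add: One_nat_def[symmetric] Suc_1)

theorem mainTheorem5:
  shows "\<exists>M :: nat \<Rightarrow> nat \<Rightarrow> nat list.
     (\<forall>i<9. \<forall>j<9. valid_entry (M i j))
   \<and> inj_on (\<lambda>(i,j). M i j) ({..<9} \<times> {..<9})
   \<and> (\<exists>S2. bimagic9 (\<lambda>i j. dec_value (M i j)) 999999 S2)
   \<and> block_sums9 (\<lambda>i j. dec_value (M i j)) 999999"
  using valid injM magic1 magic2 blocks unfolding bimagic9_def by blast

end
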